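(* For $n\ge1$, $\left|\Pi_n\wr C_2(1^11^2,1^12^2,1^22^1)\right|=2B(n)+n-1$, where $B(n)$ is the $n$th Bell number.
   Context: For $n\ge0$ let $[n]=\{1,\dots,n\}$. A $2$-colored set partition of $[n]$ is a set partition of $[n]$ together with an assignment of a color from $\{1,2\}$ to each element; $\Pi_n\wr C_2$ is the set of these. For a set $S$ of patterns, $\Pi_n\wr C_2(S)$ is the set of such colored partitions avoiding every pattern in $S$ in the pattern sense. For the patterns used here: $\sigma$ contains $1^11^2$ iff there are $i<j$ in the same block with $i$ colored $1$ and $j$ colored $2$; $1^12^2$ iff there are $i<j$ in different blocks with $i$ colored $1$ and $j$ colored $2$; $1^22^1$ iff there are $i<j$ in different blocks with $i$ colored $2$ and $j$ colored $1$. $B(n)$ is the number of set partitions of $[n]$. *)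

theory Defs
  imports Main "HOL-Library.Disjoint_Sets" "HOL-Library.FuncSet"
begin

definition set_partitions :: "nat \<Rightarrow> nat set set set" where
  "set_partitions n = {P. partition_on {1..n} P}"

definition Bell :: "nat \<Rightarrow> nat" where
  "Bell n = card (set_partitions n)"

definition colored_partitions :: "nat \<Rightarrow> (nat set set \<times> (nat \<Rightarrow> nat)) set" where
  "colored_partitions n =
     {(P, c). partition_on {1..n} P \<and> c \<in> {1..n} \<rightarrow>\<^sub>E {1, 2::nat}}"

definition same_block :: "nat set set \<Rightarrow> nat \<Rightarrow> nat \<Rightarrow> bool" where
  "same_block P i j \<longleftrightarrow> (\<exists>B\<in>P. i \<in> B \<and> j \<in> B)"

definition contains_11_12 :: "nat \<Rightarrow> nat set set \<times> (nat \<Rightarrow> nat) \<Rightarrow> bool" where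
  "contains_11_12 n \<sigma> \<longleftrightarrow> (case \<sigma> of (P, c) \<Rightarrow>
     (\<exists>i\<in>{1..n}. \<exists>j\<in>{1..n}. i < j \<and> same_block P i j \<and> c i = 1 \<and> c j = 2))"

definition contains_11_22 :: "nat \<Rightarrow> nat set set \<times> (nat \<Rightarrow> nat) \<Rightarrow> bool" where
  "contains_11_22 n \<sigma> \<longleftrightarrow> (case \<sigma> of (P, c) \<Rightarrow>
     (\<exists>i\<in>{1..n}. \<exists>j\<in>{1..n}. i < j \<and> \<not> same_block P i j \<and> c i = 1 \<and> c j = 2))"

definition contains_12_21 :: "nat \<Rightarrow> nat set set \<times> (nat \<Rightarrow> nat) \<Rightarrow> bool" where
  "contains_12_21 n \<sigma> \<longleftrightarrow> (case \<sigma> of (P, c) \<Rightarrow>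
     (\<exists>i\<in>{1..n}. \<exists>j\<in>{1..n}. i < j \<and> \<not> same_block P i j \<and> c i = 2 \<and> c j = 1))"

definition avoiders :: "nat \<Rightarrow> (nat set set \<times> (nat \<Rightarrow> nat)) set" where
  "avoiders n = {\<sigma> \<in> colored_partitions n.
     \<not> contains_11_12 n \<sigma> \<and> \<not> contains_11_22 n \<sigma> \<and> \<not> contains_12_21 n \<sigma>}"

end

theory Submission
  imports Defs
begin

definition cc :: "nat \<Rightarrow> nat \<Rightarrow> nat \<Rightarrow> nat" where
  "cc n k = restrict (\<lambda>i. if i \<le> k then 2 else 1) {1..n}"

lemma same_block_trans:
  assumes "partition_on A P" "same_block P x y" "same_block P y z"
  shows "same_block P x z"
proof -
  from assms(2) obtain B where B: "B \<in> P" "x \<in> B" "y \<in> B" unfolding same_block_def by auto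
  from assms(3) obtain C where C: "C \<in> P" "y \<in> C" "z \<in> C" unfolding same_block_def by auto
  have "B = C" using assms(1) B C unfolding partition_on_def disjoint_def by blast
  thus ?thesis using B C unfolding same_block_def by auto
qed

lemma same_block_sym: "same_block P x y \<Longrightarrow> same_block P y x"
  unfolding same_block_def by auto

lemma all_same_block:
  assumes "partition_on {1..n} P" "n \<ge> 1"
    and "\<And>x y. x \<in> {1..n} \<Longrightarrow> y \<in> {1..n} \<Longrightarrow> same_block P x y"
  shows "P = {{1..n}}"
proof -
  have sub: "B = {1..n}" if "B \<in> P" for B
  proof -
    have "B \<noteq> {}" "B \<subseteq> {1..n}" using that assms(1) unfolding partition_on_def by auto
    then obtain x where x: "x \<in> B" "x \<in> {1..n}" by blast
    have "y \<in> B" if "y \<in> {1..n}" for y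
    proof -
      from assms(3)[OF x(2) that] obtain C where C: "C \<in> P" "x \<in> C" "y \<in> C"
        unfolding same_block_def by auto
      have "B = C" using assms(1) \<open>B \<in> P\<close> x C unfolding partition_on_def disjoint_def by blast
      thus ?thesis using C by auto
    qed
    thus ?thesis using \<open>B \<subseteq> {1..n}\<close> by auto
  qed
  have "P \<noteq> {}" using assms(1,2) unfolding partition_on_def by auto
  thus ?thesis using sub by auto
qed

theorem mainTheorem15:
  fixes n :: nat
  assumes "n \<ge> 1"
  shows "card (avoiders n) = 2 * Bell n + n - 1"
proof -
  define S where "S = set_partitions n"
  define c1 where "c1 = restrict (\<lambda>i. 1::nat) {1..n}"
  define c2 where "c2 = restrict (\<lambda>i. 2::nat) {1..n}"
  define A1 where "A1 = (\<lambda>P. (P, c1)) ` S"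
  define A2 where "A2 = (\<lambda>P. (P, c2)) ` S"
  define M where "M = (\<lambda>k. ({{1..n}}, cc n k)) ` {1..<n}"
  have finS: "finite S"
  proof -
    have "S \<subseteq> Pow (Pow {1..n})" unfolding S_def set_partitions_def partition_on_def by auto
    thus ?thesis by (rule finite_subset) auto
  qed
  have cA1: "card A1 = Bell n" unfolding A1_def Bell_def S_def
    by (subst card_image) (auto simp: inj_on_def)
  have cA2: "card A2 = Bell n" unfolding A2_def Bell_def S_def
    by (subst card_image) (auto simp: inj_on_def)
  have injM: "inj_on (\<lambda>k. ({{1..n}}, cc n k)) {1..<n}"
  proof (rule inj_onI)
    fix k k' assume k: "k \<in> {1..<n}" "k' \<in> {1..<n}" and e: "({{1..n}}, cc n k) = ({{1..n}}, cc n k')"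
    hence e2: "cc n k = cc n k'" by simp
    show "k = k'"
    proof (rule ccontr)
      assume "k \<noteq> k'"
      hence "k < k' \<or> k' < k" by auto
      thus False
      proof
        assume "k < k'"
        have "cc n k k' = cc n k' k'" using e2 by simp
        thus False using k \<open>k < k'\<close> unfolding cc_def by auto
      next
        assume "k' < k"
        have "cc n k k = cc n k' k" using e2 by simp
        thus False using k \<open>k' < k\<close> unfolding cc_def by auto
      qed
    qed
  qed
  have cM: "card M = n - 1" unfolding M_def using injM by (simp add: card_image)
  have finA1: "finite A1" "finite A2" "finite M" using finS unfolding A1_def A2_def M_def by auto
  have n1: "1 \<in> {1..n}" using assms by auto
  have d1: "A1 \<inter> A2 = {}" unfolding A1_def A2_def
  proof (auto)
    assume "c1 = c2" hence "c1 1 = c2 1" by simp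
    thus False using n1 unfolding c1_def c2_def by simp
  qed
  have c1M: "c1 \<noteq> cc n k" if "k \<in> {1..<n}" for k
  proof
    assume "c1 = cc n k" hence "c1 1 = cc n k 1" by simp
    thus False using n1 that unfolding c1_def cc_def by (auto simp: restrict_def)
  qed
  have c2M: "c2 \<noteq> cc n k" if "k \<in> {1..<n}" for k
  proof
    assume "c2 = cc n k" hence "c2 n = cc n k n" by simp
    thus False using assms that unfolding c2_def cc_def by (auto simp: restrict_def)
  qed
  have d2: "(A1 \<union> A2) \<inter> M = {}" unfolding A1_def A2_def M_def
    using c1M c2M by fastforce
  have eq: "avoiders n = A1 \<union> A2 \<union> M"
  proof
    show "A1 \<union> A2 \<union> M \<subseteq> avoiders n"
    proof -
      have "A1 \<subseteq> avoiders n" unfolding A1_def S_def set_partitions_def avoiders_def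
          colored_partitions_def contains_11_12_def contains_11_22_def contains_12_21_def c1_def
        by auto
      moreover have "A2 \<subseteq> avoiders n" unfolding A2_def S_def set_partitions_def avoiders_def
          colored_partitions_def contains_11_12_def contains_11_22_def contains_12_21_def c2_def
        by auto
      moreover have "M \<subseteq> avoiders n"
      proof
        fix s assume "s \<in> M"
        then obtain k where k: "k \<in> {1..<n}" "s = ({{1..n}}, cc n k)" unfolding M_def by auto
        have sb: "same_block {{1..n}} x y" if "x \<in> {1..n}" "y \<in> {1..n}" for x y
          using that unfolding same_block_def by auto
        have p: "partition_on {1..n} {{1..n}}" using assms by (intro partition_on_space) auto
        have "cc n k \<in> {1..n} \<rightarrow>\<^sub>E {1, 2}" unfolding cc_def by auto
        moreover have "\<not> contains_11_12 n s" using k unfolding contains_11_12_def cc_def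
          by (auto split: if_splits)
        moreover have "\<not> contains_11_22 n s" using k sb unfolding contains_11_22_def by auto
        moreover have "\<not> contains_12_21 n s" using k sb unfolding contains_12_21_def by auto
        ultimately show "s \<in> avoiders n" using p k unfolding avoiders_def colored_partitions_def
          by auto
      qed
      ultimately show ?thesis by auto
    qed
  next
    show "avoiders n \<subseteq> A1 \<union> A2 \<union> M"
    proof
      fix s assume s: "s \<in> avoiders n"
      obtain P c where sPc: "s = (P, c)" by (cases s)
      have P: "partition_on {1..n} P" and c: "c \<in> {1..n} \<rightarrow>\<^sub>E {1, 2}"
        using s sPc unfolding avoiders_def colored_partitions_def by auto
      have n1: "\<not> (\<exists>i\<in>{1..n}. \<exists>j\<in>{1..n}. i < j \<and> same_block P i j \<and> c i = 1 \<and> c j = 2)"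
        using s sPc unfolding avoiders_def contains_11_12_def by auto
      have n2: "\<not> (\<exists>i\<in>{1..n}. \<exists>j\<in>{1..n}. i < j \<and> \<not> same_block P i j \<and> c i = 1 \<and> c j = 2)"
        using s sPc unfolding avoiders_def contains_11_22_def by auto
      have n3: "\<not> (\<exists>i\<in>{1..n}. \<exists>j\<in>{1..n}. i < j \<and> \<not> same_block P i j \<and> c i = 2 \<and> c j = 1)"
        using s sPc unfolding avoiders_def contains_12_21_def by auto
      have cv: "\<forall>x\<in>{1..n}. c x = 1 \<or> c x = 2" using c by (auto simp: PiE_def Pi_def)
      have PS: "P \<in> S" using P unfolding S_def set_partitions_def by auto
      have ord: "\<not> (i < j \<and> c i = 1 \<and> c j = 2)" if "i \<in> {1..n}" "j \<in> {1..n}" for i j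
      proof
        assume h: "i < j \<and> c i = 1 \<and> c j = 2"
        show False
        proof (cases "same_block P i j")
          case True thus False using n1 h that by blast
        next
          case False thus False using n2 h that by blast
        qed
      qed
      show "s \<in> A1 \<union> A2 \<union> M"
      proof (cases "\<forall>i\<in>{1..n}. c i = 1")
        case True
        have "c = c1" using c True unfolding c1_def by (auto simp: PiE_def extensional_def)
        thus ?thesis using PS sPc unfolding A1_def by auto
      next
        case F1: False
        then obtain i where i: "i \<in> {1..n}" "c i = 2" using cv by blast
        show ?thesis
        proof (cases "\<forall>i\<in>{1..n}. c i = 2")
          case True
          have "c = c2" using c True unfolding c2_def by (auto simp: PiE_def extensional_def)
          thus ?thesis using PS sPc unfolding A2_def by auto
        next
          case False
          then obtain j where j: "j \<in> {1..n}" "c j = 1" using cv by blast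
          define T where "T = {x\<in>{1..n}. c x = 2}"
          define k where "k = Max T"
          have finT: "finite T" "T \<noteq> {}" using i unfolding T_def by auto
          have kT: "k \<in> T" unfolding k_def using finT by (rule Max_in)
          have kmax: "x \<le> k" if "x \<in> T" for x unfolding k_def using finT that by auto
          have low: "c x = 2" if "x \<in> {1..n}" "x \<le> k" for x
          proof (cases "x = k")
            case True thus ?thesis using kT unfolding T_def by auto
          next
            case False
            hence "x < k" using that by auto
            moreover have "c x \<in> {1,2}" using c that by auto
            ultimately show ?thesis using ord[of x k] that kT unfolding T_def by auto
          qed
          have high: "c x = 1" if "x \<in> {1..n}" "k < x" for x
          proof -
            have "x \<notin> T" using kmax[of x] that by (meson not_le)
            thus ?thesis using c that unfolding T_def by auto
          qed
          have jk: "k < j"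
          proof (rule ccontr)
            assume "\<not> k < j" hence "j \<le> k" by simp
            hence "c j = 2" using low j(1) by blast
            thus False using j(2) by simp
          qed
          have k1: "k \<in> {1..<n}" using kT jk j unfolding T_def by auto
          have cross: "same_block P x y" if "x \<in> {1..n}" "y \<in> {1..n}" "x \<le> k" "k < y" for x y
          proof (rule ccontr)
            assume "\<not> same_block P x y"
            moreover have "x < y" using that by simp
            moreover have "c x = 2" using low that by blast
            moreover have "c y = 1" using high that by blast
            ultimately show False using n3 that by blast
          qed
          have nn: "n \<in> {1..n}" "k < n" using k1 by auto
          have allsb: "same_block P x y" if "x \<in> {1..n}" "y \<in> {1..n}" for x y
          proof -
            have xn: "same_block P x n" 
            proof (cases "x \<le> k")
              case True thus ?thesis using cross that nn by auto
            next
              case False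
              have "same_block P x k" using cross[of k x] kT False that unfolding T_def
                by (auto intro: same_block_sym)
              moreover have "same_block P k n" using cross[of k n] kT nn unfolding T_def by auto
              ultimately show ?thesis using same_block_trans[OF P] by blast
            qed
            have yn: "same_block P y n"
            proof (cases "y \<le> k")
              case True thus ?thesis using cross that nn by auto
            next
              case False
              have "same_block P y k" using cross[of k y] kT False that unfolding T_def
                by (auto intro: same_block_sym)
              moreover have "same_block P k n" using cross[of k n] kT nn unfolding T_def by auto
              ultimately show ?thesis using same_block_trans[OF P] by blast
            qed
            show ?thesis using same_block_trans[OF P xn same_block_sym[OF yn]] .
          qed
          have Pe: "P = {{1..n}}" using all_same_block[OF P assms allsb] by auto
          have "c = cc n k"
          proof
            fix x show "c x = cc n k x"
              using c low high unfolding cc_def by (cases "x \<in> {1..n}") (auto simp: PiE_def extensional_def)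
          qed
          thus ?thesis using Pe sPc k1 unfolding M_def by auto
        qed
      qed
    qed
  qed
  have "card (avoiders n) = card A1 + card A2 + card M"
    unfolding eq using finA1 d1 d2 by (simp add: card_Un_disjoint)
  thus ?thesis using cA1 cA2 cM assms by simp
qed

end
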